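(* Let $t\le 1/2$ be a positive rational number. If $G$ is a minimally $t$-tough chordal graph, then every simplicial vertex of $G$ has degree $1$.
   Context: All graphs are finite, simple and undirected. A graph is chordal if it contains no induced cycle of length at least $4$. A vertex $v$ is simplicial if its neighborhood $N(v)$ forms a clique. $\omega(H)$ denotes the number of components of $H$. A cutset of $G$ is a vertex set $S$ with $G-S$ disconnected. For positive real $t$, $G$ is $t$-tough if $\omega(G-S)\le |S|/t$ for every cutset $S$; the toughness $\tau(G)$ is the largest such $t$, with $\tau(K_n)=\infty$ for all $n\ge1$. $G$ is minimally $t$-tough if $\tau(G)=t$ and $\tau(G-e)<t$ for every edge $e$ of $G$. *)

theory Defs
  imports "HOL-Analysis.Analysis"
begin

definition simple_graph :: "'a set \<Rightarrow> 'a set set \<Rightarrow> bool" where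
  "simple_graph V E \<longleftrightarrow> finite V \<and> (\<forall>e\<in>E. \<exists>u v. e = {u, v} \<and> u \<noteq> v \<and> u \<in> V \<and> v \<in> V)"

definition nbhd :: "'a set \<Rightarrow> 'a set set \<Rightarrow> 'a \<Rightarrow> 'a set" where
  "nbhd V E v = {u \<in> V. {u, v} \<in> E}"

definition degree :: "'a set \<Rightarrow> 'a set set \<Rightarrow> 'a \<Rightarrow> nat" where
  "degree V E v = card (nbhd V E v)"

definition simplicial :: "'a set \<Rightarrow> 'a set set \<Rightarrow> 'a \<Rightarrow> bool" where
  "simplicial V E v \<longleftrightarrow> v \<in> V \<and>
     (\<forall>x\<in>nbhd V E v. \<forall>y\<in>nbhd V E v. x \<noteq> y \<longrightarrow> {x, y} \<in> E)"

definition induced_cycle :: "'a set \<Rightarrow> 'a set set \<Rightarrow> 'a list \<Rightarrow> bool" where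
  "induced_cycle V E vs \<longleftrightarrow> distinct vs \<and> set vs \<subseteq> V \<and> length vs \<ge> 3 \<and>
     (\<forall>i<length vs. \<forall>j<length vs. i \<noteq> j \<longrightarrow>
        ({vs ! i, vs ! j} \<in> E \<longleftrightarrow>
           (j = Suc i mod length vs \<or> i = Suc j mod length vs)))"

definition chordal :: "'a set \<Rightarrow> 'a set set \<Rightarrow> bool" where
  "chordal V E \<longleftrightarrow> (\<forall>vs. induced_cycle V E vs \<longrightarrow> length vs < 4)"

definition del_verts :: "'a set \<Rightarrow> 'a set set \<Rightarrow> 'a set \<Rightarrow> 'a set \<times> 'a set set" where
  "del_verts V E S = (V - S, {e \<in> E. e \<inter> S = {}})"

definition reach :: "'a set \<Rightarrow> 'a set set \<Rightarrow> ('a \<times> 'a) set" where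
  "reach V E = (Restr {(u, v). {u, v} \<in> E} V)\<^sup>*"

definition component_of :: "'a set \<Rightarrow> 'a set set \<Rightarrow> 'a \<Rightarrow> 'a set" where
  "component_of V E x = {y \<in> V. (x, y) \<in> reach V E}"

definition num_components :: "'a set \<Rightarrow> 'a set set \<Rightarrow> nat" where
  "num_components V E = card (component_of V E ` V)"

definition cutset :: "'a set \<Rightarrow> 'a set set \<Rightarrow> 'a set \<Rightarrow> bool" where
  "cutset V E S \<longleftrightarrow> S \<subseteq> V \<and> num_components (fst (del_verts V E S)) (snd (del_verts V E S)) \<ge> 2"

text \<open>t-tough: \<omega>(G-S) \<le> |S|/t for every cutset S (written multiplicatively, t > 0).\<close>
definition tough :: "'a set \<Rightarrow> 'a set set \<Rightarrow> real \<Rightarrow> bool" where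
  "tough V E t \<longleftrightarrow> (\<forall>S. cutset V E S \<longrightarrow>
      t * real (num_components (fst (del_verts V E S)) (snd (del_verts V E S))) \<le> real (card S))"

text \<open>Toughness: the largest t with G t-tough; \<infinity> if G has no cutset (complete graphs).\<close>
definition toughness :: "'a set \<Rightarrow> 'a set set \<Rightarrow> ereal" where
  "toughness V E = Sup {ereal t | t. t \<ge> 0 \<and> tough V E t}"

definition minimally_tough :: "'a set \<Rightarrow> 'a set set \<Rightarrow> real \<Rightarrow> bool" where
  "minimally_tough V E t \<longleftrightarrow> toughness V E = ereal t \<and>
     (\<forall>e\<in>E. toughness V (E - {e}) < ereal t)"

end

theory Submission
  imports Defs
begin

lemma reach_sym:
  assumes "(x,y) \<in> reach V E" shows "(y,x) \<in> reach V E"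
  using assms unfolding reach_def
proof (induction rule: rtrancl_induct)
  case base then show ?case by simp
next
  case (step y z)
  then have "(z,y) \<in> Restr {(u, v). {u, v} \<in> E} V" by (auto simp: insert_commute)
  then show ?case using step(3) by (rule converse_rtrancl_into_rtrancl)
qed

lemma comp_eq:
  assumes "(x,y) \<in> reach V E"
  shows "component_of V E x = component_of V E y"
proof -
  have yx: "(y,x) \<in> reach V E" using assms by (rule reach_sym)
  have "\<And>z. (x,z) \<in> reach V E \<longleftrightarrow> (y,z) \<in> reach V E"
    using assms yx unfolding reach_def by (meson rtrancl_trans)
  then show ?thesis unfolding component_of_def by auto
qed

lemma comp_edge:
  assumes "x \<in> V" "y \<in> V" "{x,y} \<in> E"
  shows "component_of V E x = component_of V E y"
proof -
  have "(x,y) \<in> reach V E" unfolding reach_def using assms by auto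
  then show ?thesis by (rule comp_eq)
qed

lemma const_on_reach:
  assumes "\<And>x y. x\<in>V \<Longrightarrow> y\<in>V \<Longrightarrow> {x,y}\<in>E \<Longrightarrow> f x = f y"
    and "(x,y) \<in> reach V E"
  shows "f x = f y"
  using assms(2) unfolding reach_def
proof (induction rule: rtrancl_induct)
  case base then show ?case by simp
next
  case (step y z) then show ?case using assms(1) by auto
qed

lemma card_le_ncomp:
  assumes fin: "finite V"
    and ed: "\<And>x y. x\<in>V \<Longrightarrow> y\<in>V \<Longrightarrow> {x,y}\<in>E \<Longrightarrow> f x = f y"
  shows "card (f ` V) \<le> num_components V E"
proof -
  let ?g = "\<lambda>c. f (SOME x. x \<in> c)"
  have sub: "f ` V \<subseteq> ?g ` (component_of V E ` V)"
  proof
    fix a assume "a \<in> f ` V"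
    then obtain x where x: "x \<in> V" "a = f x" by auto
    let ?c = "component_of V E x"
    have "x \<in> ?c" using x unfolding component_of_def reach_def by auto
    then have "(SOME y. y \<in> ?c) \<in> ?c" by (rule someI)
    then have "(x, SOME y. y \<in> ?c) \<in> reach V E" unfolding component_of_def by auto
    with ed have "f x = ?g ?c" by (rule const_on_reach)
    then show "a \<in> ?g ` (component_of V E ` V)" using x by auto
  qed
  have "card (f ` V) \<le> card (?g ` (component_of V E ` V))"
    using sub fin by (intro card_mono) auto
  also have "\<dots> \<le> card (component_of V E ` V)" by (rule card_image_le) (use fin in auto)
  finally show ?thesis unfolding num_components_def .
qed

lemma ncomp_le_card: "finite V \<Longrightarrow> num_components V E \<le> card V"
  unfolding num_components_def by (rule card_image_le)

lemma tough_of_toughness: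
  assumes "toughness V E = ereal t" shows "tough V E t"
proof (rule ccontr)
  assume "\<not> tough V E t"
  then obtain S where cut: "cutset V E S" and
    lt: "t * real (num_components (fst (del_verts V E S)) (snd (del_verts V E S))) > real (card S)"
    unfolding tough_def by auto
  define k where "k = real (num_components (fst (del_verts V E S)) (snd (del_verts V E S)))"
  have k0: "k > 0" using cut unfolding cutset_def k_def by auto
  have "toughness V E \<le> ereal (real (card S) / k)"
    unfolding toughness_def
  proof (rule Sup_least)
    fix x assume "x \<in> {ereal s |s. 0 \<le> s \<and> tough V E s}"
    then obtain s where s: "x = ereal s" "tough V E s" by auto
    then have "s * k \<le> real (card S)" using cut unfolding tough_def k_def by auto
    then have "s \<le> real (card S) / k" using k0 by (simp add: pos_le_divide_eq)
    then show "x \<le> ereal (real (card S) / k)" using s by simp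
  qed
  moreover have "real (card S) / k < t" using lt k0 unfolding k_def[symmetric]
    by (simp add: divide_less_eq mult.commute)
  ultimately show False using assms by simp
qed

lemma toughness_ge: "0 \<le> s \<Longrightarrow> tough V E s \<Longrightarrow> ereal s \<le> toughness V E"
  unfolding toughness_def by (rule Sup_upper) auto

lemma card2: "card {p, q} \<le> 2"
  by (cases "p = q") auto

lemma key:
  assumes fin: "finite V" and sg: "simple_graph V E"
    and tt: "tough V E t" and t0: "0 < t" and th: "t \<le> 1/2"
    and simp: "simplicial V E v"
    and u: "u \<in> nbhd V E v" and w: "w \<in> nbhd V E v" and uw: "u \<noteq> w"
    and S: "cutset V (E - {{u,w}}) S"
    and big: "t * real (num_components (V - S) {x \<in> E - {{u,w}}. x \<inter> S = {}}) > real (card S)"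
  shows False
proof -
  define VH where "VH = V - S"
  define EH where "EH = {x \<in> E - {{u,w}}. x \<inter> S = {}}"
  define cH where "cH = component_of VH EH"
  define wH where "wH = num_components VH EH"
  have SV: "S \<subseteq> V" and wH2: "wH \<ge> 2" using S unfolding cutset_def del_verts_def wH_def VH_def EH_def
    by auto
  have finS: "finite S" using SV fin by (rule finite_subset)
  have tt': "\<And>T. T \<subseteq> V \<Longrightarrow> num_components (V - T) {x \<in> E. x \<inter> T = {}} \<ge> 2 \<Longrightarrow>
     t * real (num_components (V - T) {x \<in> E. x \<inter> T = {}}) \<le> real (card T)"
    using tt unfolding tough_def cutset_def del_verts_def by auto
  have big': "t * real wH > real (card S)" using big unfolding wH_def VH_def EH_def .
  have noloop: "\<And>a. {a} \<notin> E"
  proof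
    fix a assume "{a} \<in> E"
    then obtain x y where "{a} = {x,y}" "x \<noteq> y" using sg unfolding simple_graph_def by blast
    then show False by (metis insert_iff singletonD)
  qed
  have vV: "v \<in> V" using simp unfolding simplicial_def by auto
  have uV: "u \<in> V" and uvE: "{u,v} \<in> E" using u unfolding nbhd_def by auto
  have wV: "w \<in> V" and wvE: "{w,v} \<in> E" using w unfolding nbhd_def by auto
  have uv: "u \<noteq> v" using uvE noloop by auto
  have wv: "w \<noteq> v" using wvE noloop by auto
  have nbE: "\<And>x y. x \<in> nbhd V E v \<Longrightarrow> y \<in> nbhd V E v \<Longrightarrow> x \<noteq> y \<Longrightarrow> {x,y} \<in> E"
    using simp unfolding simplicial_def by auto
  have hedge: "\<And>x y. x \<in> VH \<Longrightarrow> y \<in> VH \<Longrightarrow> {x,y} \<in> EH \<Longrightarrow> cH x = cH y"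
    unfolding cH_def by (rule comp_edge)
  have finVH: "finite VH" unfolding VH_def using fin by auto
  show False
  proof (cases "v \<in> S")
    case False
    have "card (cH ` VH) \<le> num_components VH {x \<in> E. x \<inter> S = {}}"
    proof (rule card_le_ncomp[OF finVH])
      fix x y assume x: "x \<in> VH" and y: "y \<in> VH" and xy: "{x,y} \<in> {x \<in> E. x \<inter> S = {}}"
      show "cH x = cH y"
      proof (cases "{x,y} = {u,w}")
        case True
        then have uS: "u \<in> VH" "w \<in> VH" using x y by (auto simp: doubleton_eq_iff)
        have vH: "v \<in> VH" using False vV unfolding VH_def by auto
        have "{u,v} \<in> EH" unfolding EH_def using uvE uS vH uv wv uw
          by (auto simp: VH_def doubleton_eq_iff)
        then have 1: "cH u = cH v" using hedge uS vH by auto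
        have "{v,w} \<in> EH" unfolding EH_def using wvE uS vH uv wv uw
          by (auto simp: VH_def doubleton_eq_iff insert_commute)
        then have 2: "cH v = cH w" using hedge uS vH by auto
        show ?thesis using True 1 2 by (auto simp: doubleton_eq_iff)
      next
        case False
        then have "{x,y} \<in> EH" using xy unfolding EH_def by auto
        then show ?thesis using hedge x y by auto
      qed
    qed
    then have le: "wH \<le> num_components (V - S) {x \<in> E. x \<inter> S = {}}"
      unfolding wH_def num_components_def cH_def VH_def by simp
    then have "t * real (num_components (V - S) {x \<in> E. x \<inter> S = {}}) \<le> real (card S)"
      using wH2 by (intro tt'[OF SV]) linarith
    moreover have "t * real wH \<le> t * real (num_components (V - S) {x \<in> E. x \<inter> S = {}})"
      using le t0 by (intro mult_left_mono) auto
    ultimately show False using big' by linarith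
  next
    case True
    define S' where "S' = S - {v}"
    define V' where "V' = V - S'"
    define E' where "E' = {x \<in> E. x \<inter> S' = {}}"
    define N' where "N' = nbhd V E v - S"
    define P where "P = cH ` N'"
    have N'VH: "N' \<subseteq> VH" unfolding N'_def VH_def nbhd_def by auto
    have cardP: "card P \<le> 2"
    proof (cases "u \<in> S")
      case False
      have "P \<subseteq> {cH u, cH w}"
      proof
        fix c assume "c \<in> P"
        then obtain x where x: "x \<in> N'" "c = cH x" unfolding P_def by auto
        show "c \<in> {cH u, cH w}"
        proof (cases "x = u \<or> x = w")
          case True then show ?thesis using x by auto
        next
          case False
          then have "{x,u} \<in> E" using nbE x u unfolding N'_def by auto
          moreover have "{x,u} \<noteq> {u,w}" using False by (auto simp: doubleton_eq_iff)
          moreover have "x \<notin> S" using x unfolding N'_def by auto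
          ultimately have "{x,u} \<in> EH" using \<open>u \<notin> S\<close> unfolding EH_def by auto
          moreover have "u \<in> VH" using uV \<open>u \<notin> S\<close> unfolding VH_def by auto
          ultimately have "cH x = cH u" using hedge x N'VH by auto
          then show ?thesis using x by auto
        qed
      qed
      then have "card P \<le> card {cH u, cH w}" by (intro card_mono) auto
      then show ?thesis using card2[of "cH u" "cH w"] by linarith
    next
      case uS: True
      show ?thesis
      proof (cases "N' = {}")
        case True then show ?thesis unfolding P_def by simp
      next
        case False
        then obtain a where a: "a \<in> N'" by auto
        have "P \<subseteq> {cH a}"
        proof
          fix c assume "c \<in> P"
          then obtain x where x: "x \<in> N'" "c = cH x" unfolding P_def by auto
          show "c \<in> {cH a}"
          proof (cases "x = a")
            case True then show ?thesis using x by auto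
          next
            case False
            then have "{x,a} \<in> E" using nbE x a unfolding N'_def by auto
            moreover have "x \<notin> S" "a \<notin> S" using x a unfolding N'_def by auto
            moreover have "{x,a} \<noteq> {u,w}" using uS calculation(2,3) by (auto simp: doubleton_eq_iff)
            ultimately have "{x,a} \<in> EH" unfolding EH_def by auto
            then have "cH x = cH a" using hedge x a N'VH by auto
            then show ?thesis using x by auto
          qed
        qed
        then have "card P \<le> card {cH a}" by (intro card_mono) auto
        then show ?thesis by simp
      qed
    qed
    define f where "f x = (if x = v then None else if cH x \<in> P then None else Some (cH x))" for x
    have finV': "finite V'" unfolding V'_def using fin by auto
    have cf: "card (f ` V') \<le> num_components V' E'"
    proof (rule card_le_ncomp[OF finV'])
      fix x y assume x: "x \<in> V'" and y: "y \<in> V'" and xy: "{x,y} \<in> E'"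
      have xyE: "{x,y} \<in> E" using xy unfolding E'_def by auto
      have nvS: "\<And>z. z \<in> V' \<Longrightarrow> z \<noteq> v \<Longrightarrow> z \<in> VH" unfolding V'_def VH_def S'_def by auto
      have nbv: "\<And>z. z \<in> V' \<Longrightarrow> z \<noteq> v \<Longrightarrow> {z,v} \<in> E \<Longrightarrow> f z = None"
      proof -
        fix z assume z: "z \<in> V'" "z \<noteq> v" "{z,v} \<in> E"
        then have "z \<in> N'" using nvS[OF z(1,2)] unfolding N'_def nbhd_def VH_def by auto
        then show "f z = None" unfolding f_def P_def by auto
      qed
      show "f x = f y"
      proof (cases "x = v \<or> y = v")
        case True
        then show ?thesis
        proof
          assume xv: "x = v"
          show ?thesis
          proof (cases "y = v")
            case True then show ?thesis using xv by simp
          next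
            case False
            then have "f y = None" using nbv y xyE xv by (simp add: insert_commute)
            then show ?thesis using xv unfolding f_def by simp
          qed
        next
          assume yv: "y = v"
          show ?thesis
          proof (cases "x = v")
            case True then show ?thesis using yv by simp
          next
            case False
            then have "f x = None" using nbv x xyE yv by simp
            then show ?thesis using yv unfolding f_def by simp
          qed
        qed
      next
        case False
        then have xH: "x \<in> VH" and yH: "y \<in> VH" using nvS x y by auto
        show ?thesis
        proof (cases "{x,y} = {u,w}")
          case True
          then have "x \<in> N'" "y \<in> N'" using u w xH yH unfolding N'_def VH_def
            by (auto simp: doubleton_eq_iff)
          then show ?thesis unfolding f_def P_def using False by auto
        next
          case ne: False
          have "{x,y} \<in> EH" using xyE ne xH yH unfolding EH_def VH_def by auto
          then have "cH x = cH y" using hedge xH yH by auto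
          then show ?thesis unfolding f_def using False by auto
        qed
      qed
    qed
    have sub: "insert None (Some ` (cH ` VH - P)) \<subseteq> f ` V'"
    proof
      fix z assume "z \<in> insert None (Some ` (cH ` VH - P))"
      then show "z \<in> f ` V'"
      proof
        assume "z = None"
        moreover have "v \<in> V'" using vV unfolding V'_def S'_def by auto
        ultimately show ?thesis unfolding f_def by force
      next
        assume "z \<in> Some ` (cH ` VH - P)"
        then obtain x where x: "x \<in> VH" "cH x \<notin> P" "z = Some (cH x)" by auto
        have "x \<noteq> v" using x True unfolding VH_def by auto
        moreover have "x \<in> V'" using x unfolding VH_def V'_def S'_def by auto
        ultimately show ?thesis using x unfolding f_def by force
      qed
    qed
    have finA: "finite (cH ` VH)" using finVH by auto
    have c1: "card (insert None (Some ` (cH ` VH - P))) = Suc (card (cH ` VH - P))"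
      using finA by (simp add: card_image)
    have finP: "finite P" unfolding P_def N'_def nbhd_def using fin by auto
    have c2: "card (cH ` VH) \<le> card (cH ` VH - P) + card P"
    proof -
      have "card (cH ` VH) \<le> card ((cH ` VH - P) \<union> P)"
        using finA finP by (intro card_mono) auto
      also have "\<dots> \<le> card (cH ` VH - P) + card P" by (rule card_Un_le)
      finally show ?thesis .
    qed
    have finf: "finite (f ` V')" using finV' by auto
    have "card (insert None (Some ` (cH ` VH - P))) \<le> card (f ` V')"
      using sub finf by (rule card_mono[rotated])
    then have mge: "wH \<le> num_components V' E' + 1"
      using c1 c2 cardP cf unfolding wH_def num_components_def cH_def by simp
    have cS: "card S = card S' + 1" using True finS unfolding S'_def
      using card_Suc_Diff1 by fastforce
    have S'V: "S' \<subseteq> V" using SV unfolding S'_def by auto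
    show False
    proof (cases "num_components V' E' \<ge> 2")
      case True
      then have "t * real (num_components V' E') \<le> real (card S')"
        unfolding V'_def E'_def by (intro tt'[OF S'V]) (use True in \<open>simp add: V'_def E'_def\<close>)
      moreover have "t * real wH \<le> t * real (num_components V' E') + t"
      proof -
        have "real wH \<le> real (num_components V' E') + 1" using mge by linarith
        then have "t * real wH \<le> t * (real (num_components V' E') + 1)"
          using t0 by (intro mult_left_mono) auto
        then show ?thesis by (simp add: distrib_left)
      qed
      moreover have "real (card S) = real (card S') + 1" using cS by simp
      ultimately show False using big' th by linarith
    next
      case False
      then have "wH \<le> 2" using mge by auto
      then have "real wH \<le> 2" by simp
      then have "t * real wH \<le> t * 2" using t0 by (intro mult_left_mono) auto
      then have "t * real wH \<le> 1" using th by linarith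
      moreover have "real (card S) \<ge> 1" using cS by simp
      ultimately show False using big' by linarith
    qed
  qed
qed

theorem mainTheorem3:
  fixes V :: "'a set" and E :: "'a set set" and t :: real
  assumes "simple_graph V E"
    and "t \<in> \<rat>" and "0 < t" and "t \<le> 1/2"
    and "minimally_tough V E t"
    and "chordal V E"
    and "simplicial V E v"
  shows "degree V E v = 1"
proof -
  note sg = assms(1) and t0 = assms(3) and th = assms(4) and mt = assms(5) and simp = assms(7)
  have fin: "finite V" using sg unfolding simple_graph_def by auto
  have vV: "v \<in> V" using simp unfolding simplicial_def by auto
  have tt: "tough V E t" using mt tough_of_toughness unfolding minimally_tough_def by blast
  have crit: "\<And>e. e \<in> E \<Longrightarrow> \<not> tough V (E - {e}) t"
  proof
    fix e assume e: "e \<in> E" and tg: "tough V (E - {e}) t"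
    have "ereal t \<le> toughness V (E - {e})" using toughness_ge[OF _ tg] t0 by auto
    then show False using mt e unfolding minimally_tough_def by auto
  qed
  have finN: "finite (nbhd V E v)" using fin unfolding nbhd_def by auto
  have le1: "card (nbhd V E v) \<le> 1"
  proof (rule ccontr)
    assume "\<not> card (nbhd V E v) \<le> 1"
    then obtain u w where u: "u \<in> nbhd V E v" and w: "w \<in> nbhd V E v" and uw: "u \<noteq> w"
      using finN card_le_Suc0_iff_eq by (metis One_nat_def)
    have "{u,w} \<in> E" using simp u w uw unfolding simplicial_def by auto
    then have "\<not> tough V (E - {{u,w}}) t" by (rule crit)
    then obtain S where S: "cutset V (E - {{u,w}}) S" and
      big: "t * real (num_components (V - S) {x \<in> E - {{u,w}}. x \<inter> S = {}}) > real (card S)"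
      unfolding tough_def del_verts_def by auto
    show False using key[OF fin sg tt t0 th simp u w uw S big] .
  qed
  have ne: "nbhd V E v \<noteq> {}"
  proof
    assume nb: "nbhd V E v = {}"
    show False
    proof (cases "\<exists>y\<in>V. y \<noteq> v")
      case True
      then obtain y where y: "y \<in> V" "y \<noteq> v" by auto
      have "card ((\<lambda>x. x = v) ` V) \<le> num_components V E"
      proof (rule card_le_ncomp[OF fin])
        fix x z assume x: "x \<in> V" and z: "z \<in> V" and xz: "{x,z} \<in> E"
        have "x \<notin> nbhd V E v" "z \<notin> nbhd V E v" using nb by auto
        then show "(x = v) = (z = v)" using x z xz unfolding nbhd_def by (auto simp: insert_commute)
      qed
      moreover have "(\<lambda>x. x = v) ` V = {True, False}" using y vV by auto
      ultimately have c2: "num_components V E \<ge> 2" by simp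
      have "cutset V E {}" unfolding cutset_def del_verts_def using c2 by simp
      then have "t * real (num_components V E) \<le> 0" using tt unfolding tough_def del_verts_def by force
      then show False using t0 c2 by (simp add: mult_le_0_iff)
    next
      case False
      then have V1: "V = {v}" using vV by blast
      have tg1: "tough V E (t + 1)" unfolding tough_def
      proof (intro allI impI)
        fix S assume cS: "cutset V E S"
        have c2: "2 \<le> num_components (V - S) {e \<in> E. e \<inter> S = {}}"
          using cS unfolding cutset_def del_verts_def by simp
        have "num_components (V - S) {e \<in> E. e \<inter> S = {}} \<le> card (V - S)"
          by (rule ncomp_le_card) (use fin in auto)
        moreover have "card (V - S) \<le> 1" using V1 by (simp add: card_le_Suc0_iff_eq)
        ultimately have False using c2 by linarith
        then show "(t + 1) * real (num_components (fst (del_verts V E S)) (snd (del_verts V E S))) \<le> real (card S)"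
          by simp
      qed
      have "ereal (t + 1) \<le> toughness V E" by (rule toughness_ge[OF _ tg1]) (use t0 in simp)
      then show False using mt unfolding minimally_tough_def by auto
    qed
  qed
  have "card (nbhd V E v) \<ge> 1" using ne finN by (simp add: Suc_leI card_gt_0_iff)
  then show ?thesis unfolding degree_def using le1 by simp
qed

end
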